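(* Let $p\ge1$, let $A:\mathbb{R}\to\mathbb{R}$, and let $\boldsymbol{x},\boldsymbol{w}\in\mathbb{R}^p$ be such that $x_jw_j\neq0$ for some $j$. For $\tau\in(0,1)$ and $c\in(0,+\infty)$ define $\theta=\boldsymbol{w}^T\boldsymbol{x}$, $s_j=\mathrm{sgn}(w_j)$ (with $\mathrm{sgn}(0)=0$), $q_j=x_j(w_j+cs_j)$, $\theta_{j-}=\theta-q_j$, $\theta_{j+}=\theta+\frac{\tau}{1-\tau}q_j$, and $$\pi(\boldsymbol{w})=\pi_{\tau,c}(\boldsymbol{w})=\tau\sum_{j=1}^{p}A(\theta_{j-})+(1-\tau)\sum_{j=1}^{p}A(\theta_{j+})-pA(\theta).$$ Then: (i) if $A$ is convex, $\pi(\boldsymbol{w})$ is monotonically increasing as a function of $\tau\in(0,1)$ (for fixed $c$); (ii) if $A$ is twice differentiable with $A''(\theta)>0$ for all $\theta$, then $\pi(\boldsymbol{w})$ is monotonically increasing as a function of $c\in(0,+\infty)$ (for fixed $\tau$).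
   Context: $\pi$ is the Shakeout regularizer of a generalized linear model with log-partition function $A$, Shakeout hyper-parameters $\tau$ and $c$, and feature vector $\boldsymbol{x}$. *)

theory Defs
  imports "HOL-Analysis.Analysis"
begin

text \<open>Shakeout regularizer pi_{tau,c}(w) for a GLM with log-partition A and feature x in R^p
  (p = CARD('n)). sgn on reals satisfies sgn 0 = 0.\<close>

definition shakeout_pi :: "(real \<Rightarrow> real) \<Rightarrow> real \<Rightarrow> real \<Rightarrow> real^'n \<Rightarrow> real^'n \<Rightarrow> real" where
  "shakeout_pi A \<tau> c x w =
    (let \<theta> = w \<bullet> x;
         q = (\<lambda>j. x $ j * (w $ j + c * sgn (w $ j)))
     in \<tau> * (\<Sum>j\<in>UNIV. A (\<theta> - q j))
        + (1 - \<tau>) * (\<Sum>j\<in>UNIV. A (\<theta> + \<tau> / (1 - \<tau>) * q j))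
        - real CARD('n) * A \<theta>)"

end

theory Submission
  imports Defs
begin

lemma tau_step:
  fixes A :: "real \<Rightarrow> real"
  assumes cv: "convex_on UNIV A" and t1: "0 < t1" "t1 \<le> t2" "t2 < 1"
  shows "t1 * A (th - q) + (1 - t1) * A (th + t1 / (1 - t1) * q)
       \<le> t2 * A (th - q) + (1 - t2) * A (th + t2 / (1 - t2) * q)"
proof -
  define l where "l = (t2 - t1) / (1 - t1)"
  have r: "t1/(1-t1) \<le> t2/(1-t2)" using t1 by (simp add: divide_simps algebra_simps)
  have l0: "0 \<le> l" unfolding l_def using t1 by simp
  have ne: "1 - t1 \<noteq> 0" "1 - t2 \<noteq> 0" using t1 by auto
  have l1m: "1 - l = (1 - t2) / (1 - t1)" unfolding l_def using ne by (simp add: field_simps)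
  have l1: "l \<le> 1" unfolding l_def using t1 by (simp add: divide_simps)
  have eq: "(1 - l) *\<^sub>R (th + t2 / (1 - t2) * q) + l *\<^sub>R (th - q) = th + t1 / (1 - t1) * q"
  proof -
    have a: "(1 - l) * (t2/(1-t2)*q) = t2/(1-t1)*q" using l1m ne by simp
    have b0: "t2/(1-t1) - l = t1/(1-t1)" unfolding l_def by (simp add: diff_divide_distrib[symmetric])
    have b: "t2/(1-t1)*q - l*q = t1/(1-t1)*q" using b0 by (metis left_diff_distrib)
    have "(1 - l) *\<^sub>R (th + t2 / (1 - t2) * q) + l *\<^sub>R (th - q)
        = th + ((1 - l) * (t2/(1-t2)*q) - l * q)" by (simp add: algebra_simps)
    then show ?thesis using a b by simp
  qed
  have "A (th + t1 / (1 - t1) * q) \<le> (1 - l) * A (th + t2 / (1 - t2) * q) + l * A (th - q)"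
    using convex_onD[OF cv, of l "th + t2 / (1 - t2) * q" "th - q"] l0 l1 eq by simp
  hence "(1 - t1) * A (th + t1 / (1 - t1) * q) \<le> (1 - t1) * ((1 - l) * A (th + t2 / (1 - t2) * q) + l * A (th - q))"
    using t1 by (intro mult_left_mono) auto
  also have "\<dots> = (1 - t2) * A (th + t2 / (1 - t2) * q) + (1 - t1) * l * A (th - q)"
  proof -
    have m1: "(1-t1)*(1-l) = 1-t2" using l1m ne by simp
    have "(1 - t1) * ((1 - l) * A (th + t2 / (1 - t2) * q) + l * A (th - q))
      = ((1-t1)*(1-l)) * A (th + t2 / (1 - t2) * q) + (1 - t1) * l * A (th - q)"
      by (simp add: algebra_simps)
    then show ?thesis using m1 by simp
  qed
  also have "(1 - t1) * l = t2 - t1" using l1m t1 by (simp add: field_simps)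
  finally show ?thesis by (simp add: algebra_simps)
qed

lemma scale_step:
  fixes A :: "real \<Rightarrow> real"
  assumes cv: "convex_on UNIV A" and t: "0 < t" "t < 1" and s: "0 \<le> s1" "s1 \<le> s2"
  shows "t * A (th - s1 * r) + (1 - t) * A (th + t / (1 - t) * (s1 * r))
       \<le> t * A (th - s2 * r) + (1 - t) * A (th + t / (1 - t) * (s2 * r))"
proof (cases "s2 = 0")
  case True then show ?thesis using s by simp
next
  case False
  hence s2: "s2 > 0" using s by simp
  define m where "m = s1 / s2"
  have m0: "0 \<le> m" "m \<le> 1" unfolding m_def using s s2 by auto
  have e1: "(1 - m) *\<^sub>R th + m *\<^sub>R (th - s2 * r) = th - s1 * r"
    unfolding m_def using s2 by (simp add: field_simps)
  have e2: "(1 - m) *\<^sub>R th + m *\<^sub>R (th + t / (1 - t) * (s2 * r)) = th + t / (1 - t) * (s1 * r)"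
    unfolding m_def using s2 t by (simp add: field_simps)
  have a1: "A (th - s1 * r) \<le> (1 - m) * A th + m * A (th - s2 * r)"
    using convex_onD[OF cv, of m th "th - s2 * r"] m0 e1 by simp
  have a2: "A (th + t / (1 - t) * (s1 * r)) \<le> (1 - m) * A th + m * A (th + t / (1 - t) * (s2 * r))"
    using convex_onD[OF cv, of m th "th + t / (1 - t) * (s2 * r)"] m0 e2 by simp
  have e3: "(1 - (1 - t)) *\<^sub>R (th - s2 * r) + (1 - t) *\<^sub>R (th + t / (1 - t) * (s2 * r)) = th"
    using t by (simp add: field_simps)
  have j: "A th \<le> t * A (th - s2 * r) + (1 - t) * A (th + t / (1 - t) * (s2 * r))"
    using convex_onD[OF cv, of "1 - t" "th - s2 * r" "th + t / (1 - t) * (s2 * r)"] t e3 by simp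
  define P where "P = t * A (th - s2 * r) + (1 - t) * A (th + t / (1 - t) * (s2 * r))"
  have "t * A (th - s1 * r) + (1 - t) * A (th + t / (1 - t) * (s1 * r))
      \<le> t * ((1 - m) * A th + m * A (th - s2 * r)) + (1 - t) * ((1 - m) * A th + m * A (th + t / (1 - t) * (s2 * r)))"
    using a1 a2 t by (intro add_mono mult_left_mono) auto
  also have "\<dots> = (1 - m) * A th + m * P" unfolding P_def by (simp add: algebra_simps)
  also have "\<dots> \<le> (1 - m) * P + m * P" using j m0 t unfolding P_def by (intro add_mono mult_left_mono) auto
  finally show ?thesis unfolding P_def by (simp add: algebra_simps)
qed

lemma q_c_step:
  fixes A :: "real \<Rightarrow> real"
  assumes cv: "convex_on UNIV A" and t: "0 < t" "t < 1" and c: "0 < c1" "c1 \<le> c2"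
  shows "t * A (th - xj * (wj + c1 * sgn wj)) + (1 - t) * A (th + t / (1 - t) * (xj * (wj + c1 * sgn wj)))
       \<le> t * A (th - xj * (wj + c2 * sgn wj)) + (1 - t) * A (th + t / (1 - t) * (xj * (wj + c2 * sgn wj)))"
proof (cases "wj = 0")
  case True then show ?thesis by simp
next
  case False
  have q: "xj * (wj + c * sgn wj) = (\<bar>wj\<bar> + c) * (xj * sgn wj)" for c
    using False by (cases "wj > 0") (auto simp: algebra_simps)
  show ?thesis unfolding q
    by (rule scale_step[OF cv t]) (use c in auto)
qed

lemma sum_mono_fun:
  fixes f g :: "'n::finite \<Rightarrow> real"
  shows "(\<And>j. f j \<le> g j) \<Longrightarrow> sum f UNIV \<le> sum g UNIV"
  by (rule sum_mono) auto

theorem proposition3: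
  fixes A :: "real \<Rightarrow> real" and x w :: "real^'n"
  assumes "\<exists>j. x $ j * w $ j \<noteq> 0"
  shows "(convex_on UNIV A \<longrightarrow>
           (\<forall>c>0. mono_on {0<..<1} (\<lambda>\<tau>. shakeout_pi A \<tau> c x w)))
       \<and> ((\<forall>t. A differentiable (at t)) \<and> (\<forall>t. deriv A differentiable (at t))
           \<and> (\<forall>t. deriv (deriv A) t > 0) \<longrightarrow>
           (\<forall>\<tau>\<in>{0<..<1}. mono_on {0<..} (\<lambda>c. shakeout_pi A \<tau> c x w)))"
proof (intro conjI impI allI ballI)
  fix c :: real
  assume cv: "convex_on UNIV A" and "c > 0"
  show "mono_on {0<..<1} (\<lambda>\<tau>. shakeout_pi A \<tau> c x w)"
  proof (rule mono_onI)
    fix t1 t2 :: real assume "t1 \<in> {0<..<1}" "t2 \<in> {0<..<1}" "t1 \<le> t2"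
    hence t: "0 < t1" "t1 \<le> t2" "t2 < 1" by auto
    let ?q = "\<lambda>j. x $ j * (w $ j + c * sgn (w $ j))"
    have "(\<Sum>j\<in>UNIV. t1 * A (w \<bullet> x - ?q j) + (1 - t1) * A (w \<bullet> x + t1 / (1 - t1) * ?q j))
        \<le> (\<Sum>j\<in>UNIV. t2 * A (w \<bullet> x - ?q j) + (1 - t2) * A (w \<bullet> x + t2 / (1 - t2) * ?q j))"
      by (rule sum_mono_fun) (rule tau_step[OF cv t])
    thus "shakeout_pi A t1 c x w \<le> shakeout_pi A t2 c x w"
      unfolding shakeout_pi_def Let_def by (simp add: sum.distrib sum_distrib_left)
  qed
next
  fix t :: real
  assume h: "(\<forall>t. A differentiable (at t)) \<and> (\<forall>t. deriv A differentiable (at t))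
           \<and> (\<forall>t. deriv (deriv A) t > 0)" and tt: "t \<in> {0<..<1}"
  have d1: "\<And>y. (A has_real_derivative deriv A y) (at y)"
    using h DERIV_deriv_iff_real_differentiable by blast
  have d2: "\<And>y. (deriv A has_real_derivative deriv (deriv A) y) (at y)"
    using h DERIV_deriv_iff_real_differentiable by blast
  have mono: "deriv A a \<le> deriv A b" if "a \<le> b" for a b
  proof (cases "a = b")
    case False
    hence "a < b" using that by simp
    thus ?thesis using DERIV_pos_imp_increasing[of a b "deriv A"] d2 h by force
  qed simp
  have cv: "convex_on UNIV A"
    by (rule convex_on_realI[where f' = "deriv A"]) (use d1 mono in auto)
  have t: "0 < t" "t < 1" using tt by auto
  show "mono_on {0<..} (\<lambda>c. shakeout_pi A t c x w)"
  proof (rule mono_onI)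
    fix c1 c2 :: real assume "c1 \<in> {0<..}" "c2 \<in> {0<..}" "c1 \<le> c2"
    hence c: "0 < c1" "c1 \<le> c2" by auto
    have "(\<Sum>j\<in>UNIV. t * A (w \<bullet> x - x $ j * (w $ j + c1 * sgn (w $ j))) + (1 - t) * A (w \<bullet> x + t / (1 - t) * (x $ j * (w $ j + c1 * sgn (w $ j)))))
        \<le> (\<Sum>j\<in>UNIV. t * A (w \<bullet> x - x $ j * (w $ j + c2 * sgn (w $ j))) + (1 - t) * A (w \<bullet> x + t / (1 - t) * (x $ j * (w $ j + c2 * sgn (w $ j)))))"
      by (rule sum_mono_fun) (rule q_c_step[OF cv t c])
    thus "shakeout_pi A t c1 x w \<le> shakeout_pi A t c2 x w"
      unfolding shakeout_pi_def Let_def by (simp add: sum.distrib sum_distrib_left)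
  qed
qed

end
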